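(* Let $A\in\mathbb{S}^{\omega n}$ be positive definite, viewed as an $\omega\times\omega$ block matrix with blocks $A_{i,j}\in\mathbb{R}^{n\times n}$, and suppose $A$ is $q$-banded for an even positive integer $q$, i.e., $A_{i,j}=0$ whenever $|i-j|>q/2$. Let $[a_0,b_0]$ ($b_0>a_0>0$) be the smallest interval containing the spectrum of $A$. Let $D=\mathrm{diag}(D_1,\dots,D_\omega)$ with each $D_i\in\mathbb{S}^n$ positive semidefinite. For nonempty $S_R,S_C\subseteq\{1,\dots,\omega\}$ let $M=((A+D)^{-1})_{S_R,S_C}$. Then $\|M\|\le C\gamma^{\hat d}$, where \[C=\frac{2}{a_0},\quad \gamma=\left(\frac{\sqrt{\mathrm{cond}(A)}-1}{\sqrt{\mathrm{cond}(A)}+1}\right)^{2/q},\quad \hat d=\min_{i\in S_R,\,j\in S_C}|i-j|,\] and $\mathrm{cond}(A)=b_0/a_0$.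
   Context: $\|\cdot\|$ is the induced matrix 2-norm; $\mathbb{S}^k$ denotes the symmetric $k\times k$ real matrices. For an $\omega\times\omega$ block matrix $X$ with blocks $X_{i,j}\in\mathbb{R}^{n\times n}$ and sets $S_R=\{i_1<\dots<i_{|S_R|}\}$, $S_C=\{j_1<\dots<j_{|S_C|}\}$, $X_{S_R,S_C}\in\mathbb{R}^{|S_R|n\times|S_C|n}$ is the block matrix whose $(r,s)$ block is $X_{i_r,j_s}$. *)

theory Defs
  imports "HOL-Analysis.Analysis"
begin

text \<open>Block matrices: an (omega n) x (omega n) real matrix is represented with row/column
index type ('w \<times> 'b), where 'w (card omega) indexes blocks and 'b (card n) indexes
positions inside a block.  Block indices are numbered 0,...,omega-1 according to the
linear order on 'w.\<close>

definition blk_pos :: "'w::{finite,linorder} \<Rightarrow> nat" where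
  "blk_pos i = card {k. k < i}"

definition blk_dist :: "'w::{finite,linorder} \<Rightarrow> 'w \<Rightarrow> nat" where
  "blk_dist i j = nat \<bar>int (blk_pos i) - int (blk_pos j)\<bar>"

definition blk :: "real^('w::finite \<times> 'b::finite)^('w \<times> 'b) \<Rightarrow> 'w \<Rightarrow> 'w \<Rightarrow> real^'b^'b" where
  "blk X i j = (\<chi> k l. X $ (i,k) $ (j,l))"

definition sym_mat :: "real^'n^'n \<Rightarrow> bool" where
  "sym_mat X \<longleftrightarrow> transpose X = X"

definition pos_def_mat :: "real^'n^'n \<Rightarrow> bool" where
  "pos_def_mat X \<longleftrightarrow> sym_mat X \<and> (\<forall>x. x \<noteq> 0 \<longrightarrow> 0 < x \<bullet> (X *v x))"

definition pos_semidef_mat :: "real^'n^'n \<Rightarrow> bool" where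
  "pos_semidef_mat X \<longleftrightarrow> sym_mat X \<and> (\<forall>x. 0 \<le> x \<bullet> (X *v x))"

definition mat_spectrum :: "real^'n^'n \<Rightarrow> real set" where
  "mat_spectrum X = {c. \<exists>v. v \<noteq> 0 \<and> X *v v = c *\<^sub>R v}"

definition blk_proj :: "'w::finite set \<Rightarrow> real^('w \<times> 'b::finite) \<Rightarrow> real^('w \<times> 'b)" where
  "blk_proj S x = (\<chi> p. if fst p \<in> S then x $ p else 0)"

text \<open>Induced 2-norm of the block submatrix X_{S_R,S_C}: it equals the operator norm of
the map x \<mapsto> P_{S_R} X P_{S_C} x, since zero padding is norm preserving.\<close>
definition blk_sub_norm :: "real^('w::finite \<times> 'b::finite)^('w \<times> 'b) \<Rightarrow> 'w set \<Rightarrow> 'w set \<Rightarrow> real" where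
  "blk_sub_norm X SR SC = onorm (\<lambda>x. blk_proj SR (X *v blk_proj SC x))"

end

theory Submission
  imports Defs
begin

lemma mv_inner_transpose:
  fixes M :: "real^'n^'m"
  shows "(M *v x) \<bullet> y = x \<bullet> (transpose M *v y)"
  by (metis dot_lmul_matrix inner_commute transpose_transpose vector_transpose_matrix)

lemma sym_inner:
  fixes M :: "real^'n^'n"
  assumes "sym_mat M"
  shows "(M *v x) \<bullet> y = x \<bullet> (M *v y)"
  using assms by (simp add: sym_mat_def mv_inner_transpose)

lemma cont_quad: "continuous_on U (\<lambda>x::real^'n. x \<bullet> (M *v x))"
  by (intro continuous_intros linear_continuous_on bounded_linear_intros)
    (simp add: matrix_vector_mul_bounded_linear)

lemma quad_expand:
  fixes M :: "real^'n^'n"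
  assumes "sym_mat M"
  shows "(v + t *\<^sub>R w) \<bullet> (M *v (v + t *\<^sub>R w)) = v \<bullet> (M *v v) + 2 * t * (w \<bullet> (M *v v)) + t^2 * (w \<bullet> (M *v w))"
proof -
  have s: "v \<bullet> (M *v w) = w \<bullet> (M *v v)"
    using sym_inner[OF assms, of v w] by (simp add: inner_commute)
  show ?thesis
    by (simp add: matrix_vector_right_distrib matrix_vector_mult_scaleR inner_add_left inner_add_right s power2_eq_square algebra_simps)
qed

lemma lin_quad_zero:
  fixes a b :: real
  assumes "\<And>t. 2 * t * a \<le> t^2 * b"
  shows "a = 0"
proof (rule ccontr)
  assume "a \<noteq> 0"
  define t where "t = a / (\<bar>b\<bar> + 1)"
  have pos: "\<bar>b\<bar> + 1 > 0" by simp
  have "2 * t * a \<le> t^2 * b" by (rule assms)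
  hence "2 * t * a * (\<bar>b\<bar> + 1)^2 \<le> t^2 * b * (\<bar>b\<bar> + 1)^2"
    by (simp add: mult_right_mono)
  moreover have "2 * t * a * (\<bar>b\<bar> + 1)^2 = 2 * a^2 * (\<bar>b\<bar> + 1)"
    using pos unfolding t_def by (simp add: power2_eq_square field_simps)
  moreover have "t^2 * b * (\<bar>b\<bar> + 1)^2 = a^2 * b"
    using pos unfolding t_def by (simp add: power_divide)
  ultimately have "2 * a^2 * (\<bar>b\<bar> + 1) \<le> a^2 * b" by simp
  moreover have "a^2 > 0" using \<open>a \<noteq> 0\<close> by simp
  ultimately have "2 * (\<bar>b\<bar> + 1) \<le> b" by (simp add: mult.commute mult.left_commute)
  thus False by (cases "b \<ge> 0") auto
qed

lemma rayleigh_max: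
  fixes G B T :: "real^'n^'n" and S :: "(real^'n) set"
  assumes symG: "sym_mat G" and symB: "sym_mat B" and GT: "G ** T = B"
    and mu: "0 < mu" and pd: "\<And>x. mu * (norm x)^2 \<le> x \<bullet> (G *v x)"
    and S: "subspace S" and inv: "\<And>x. x \<in> S \<Longrightarrow> T *v x \<in> S"
    and ne: "x0 \<in> S" "x0 \<noteq> 0"
  shows "\<exists>v l. v \<in> S \<and> v \<bullet> (G *v v) = 1 \<and> T *v v = l *\<^sub>R v
            \<and> (\<forall>x\<in>S. x \<bullet> (B *v x) \<le> l * (x \<bullet> (G *v x)))"
proof -
  define K where "K = S \<inter> {x. x \<bullet> (G *v x) = 1}"
  have bK: "bounded K"
    unfolding bounded_iff
  proof (intro exI ballI)
    fix x assume "x \<in> K"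
    hence "mu * (norm x)^2 \<le> 1" using pd[of x] by (simp add: K_def)
    hence "(norm x)^2 \<le> 1 / mu" using mu by (simp add: field_simps)
    show "norm x \<le> 1 + 1 / mu"
    proof (cases "norm x \<le> 1")
      case True thus ?thesis using mu by (smt (verit) divide_pos_pos)
    next
      case False
      hence "norm x * 1 \<le> norm x * norm x" by (intro mult_left_mono) auto
      hence "norm x \<le> (norm x)^2" by (simp add: power2_eq_square)
      thus ?thesis using \<open>(norm x)^2 \<le> 1 / mu\<close> by linarith
    qed
  qed
  have cK: "closed K"
    unfolding K_def
    by (intro closed_Int closed_subspace S closed_Collect_eq cont_quad continuous_on_const)
  have compK: "compact K" using bK cK by (simp add: compact_eq_bounded_closed)
  define c where "c = x0 \<bullet> (G *v x0)"
  have "mu * (norm x0)^2 > 0" using mu ne by simp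
  hence cpos: "c > 0" using pd[of x0] unfolding c_def by linarith
  define y where "y = (1 / sqrt c) *\<^sub>R x0"
  have "y \<in> S" unfolding y_def using S ne by (simp add: subspace_scale)
  moreover have "y \<bullet> (G *v y) = 1"
    unfolding y_def using cpos
    by (simp add: matrix_vector_mult_scaleR c_def[symmetric] power2_eq_square[symmetric])
  ultimately have "K \<noteq> {}" unfolding K_def by blast
  then obtain v where vK: "v \<in> K" and vmax: "\<And>x. x \<in> K \<Longrightarrow> x \<bullet> (B *v x) \<le> v \<bullet> (B *v v)"
    using continuous_attains_sup[OF compK _ cont_quad[of K B]] by blast
  define l where "l = v \<bullet> (B *v v)"
  have vS: "v \<in> S" and vG: "v \<bullet> (G *v v) = 1" using vK by (auto simp: K_def)
  have hom: "x \<bullet> (B *v x) \<le> l * (x \<bullet> (G *v x))" if xS: "x \<in> S" for x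
  proof (cases "x = 0")
    case True thus ?thesis by simp
  next
    case False
    define cx where "cx = x \<bullet> (G *v x)"
    have "mu * (norm x)^2 > 0" using mu False by simp
    hence cxpos: "cx > 0" using pd[of x] unfolding cx_def by linarith
    define z where "z = (1 / sqrt cx) *\<^sub>R x"
    have "z \<in> S" unfolding z_def using S xS by (simp add: subspace_scale)
    moreover have "z \<bullet> (G *v z) = 1"
      unfolding z_def using cxpos
      by (simp add: matrix_vector_mult_scaleR cx_def[symmetric] power2_eq_square[symmetric])
    ultimately have "z \<bullet> (B *v z) \<le> l" using vmax unfolding K_def l_def by blast
    moreover have "z \<bullet> (B *v z) = (x \<bullet> (B *v x)) / cx"
      unfolding z_def using cxpos
      by (simp add: matrix_vector_mult_scaleR power2_eq_square[symmetric])
    ultimately have "(x \<bullet> (B *v x)) / cx \<le> l" by simp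
    thus ?thesis using cxpos by (simp add: cx_def[symmetric] pos_divide_le_eq mult.commute)
  qed
  have orth: "w \<bullet> (B *v v) = 0" if wS: "w \<in> S" and wG: "w \<bullet> (G *v v) = 0" for w
  proof (rule lin_quad_zero[where b = "l * (w \<bullet> (G *v w)) - w \<bullet> (B *v w)"])
    fix t :: real
    have "v + t *\<^sub>R w \<in> S" using S vS wS by (simp add: subspace_add subspace_scale)
    hence "(v + t *\<^sub>R w) \<bullet> (B *v (v + t *\<^sub>R w)) \<le> l * ((v + t *\<^sub>R w) \<bullet> (G *v (v + t *\<^sub>R w)))"
      by (rule hom)
    thus "2 * t * (w \<bullet> (B *v v)) \<le> t^2 * (l * (w \<bullet> (G *v w)) - w \<bullet> (B *v w))"
      unfolding quad_expand[OF symB] quad_expand[OF symG] wG vG l_def[symmetric]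
      by (simp add: algebra_simps)
  qed
  define u where "u = T *v v - l *\<^sub>R v"
  have uS: "u \<in> S" unfolding u_def using S vS inv by (simp add: subspace_diff subspace_scale)
  have TG: "(T *v x) \<bullet> (G *v y) = x \<bullet> (B *v y)" for x y
  proof -
    have "(T *v x) \<bullet> (G *v y) = (G *v (T *v x)) \<bullet> y"
      using sym_inner[OF symG, of "T *v x" y] by simp
    also have "\<dots> = (B *v x) \<bullet> y" by (simp add: matrix_vector_mul_assoc GT)
    also have "\<dots> = x \<bullet> (B *v y)" by (rule sym_inner[OF symB])
    finally show ?thesis .
  qed
  have GTv: "G *v (T *v x) = B *v x" for x by (simp add: matrix_vector_mul_assoc GT)
  have "u \<bullet> (G *v v) = 0"
    unfolding u_def using TG[of v v] vG
    by (simp add: inner_diff_left l_def)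
  hence uB: "u \<bullet> (B *v v) = 0" using orth uS by blast
  have "u \<bullet> (G *v u) = u \<bullet> (G *v (T *v v)) - l * (u \<bullet> (G *v v))"
    unfolding u_def by (simp add: matrix_vector_mult_diff_distrib matrix_vector_mult_scaleR inner_diff_right)
  also have "\<dots> = 0" using uB \<open>u \<bullet> (G *v v) = 0\<close> by (simp add: GTv)
  finally have "mu * (norm u)^2 \<le> 0" using pd[of u] by simp
  hence "u = 0" using mu by (simp add: mult_le_0_iff)
  hence "T *v v = l *\<^sub>R v" unfolding u_def by simp
  thus ?thesis using vS vG hom by blast
qed

lemma spectral_bound:
  fixes G B T F :: "real^'n^'n"
  assumes symG: "sym_mat G" and symB: "sym_mat B" and GT: "G ** T = B"
    and mu: "0 < mu" and pd: "\<And>x. mu * (norm x)^2 \<le> x \<bullet> (G *v x)"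
    and ray: "\<And>x. m * (x \<bullet> (G *v x)) \<le> x \<bullet> (B *v x) \<and> x \<bullet> (B *v x) \<le> M * (x \<bullet> (G *v x))"
    and Finv: "\<And>S. subspace S \<Longrightarrow> (\<forall>x\<in>S. T *v x \<in> S) \<Longrightarrow> (\<forall>x\<in>S. F *v x \<in> S)"
    and Feig: "\<And>v l. T *v v = l *\<^sub>R v \<Longrightarrow> F *v v = phi l *\<^sub>R v"
    and phib: "\<And>l. m \<le> l \<Longrightarrow> l \<le> M \<Longrightarrow> \<bar>phi l\<bar> \<le> c"
  shows "subspace S \<Longrightarrow> (\<forall>x\<in>S. T *v x \<in> S) \<Longrightarrow> x \<in> S \<Longrightarrow>
         (F *v x) \<bullet> (G *v (F *v x)) \<le> c^2 * (x \<bullet> (G *v x))"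
proof (induction "dim S" arbitrary: S x rule: less_induct)
  case less
  note S = less.prems(1) and inv = less.prems(2) and xS = less.prems(3)
  show ?case
  proof (cases "S \<subseteq> {0}")
    case True
    hence "x = 0" using xS by blast
    thus ?thesis by simp
  next
    case False
    then obtain x0 where x0: "x0 \<in> S" "x0 \<noteq> 0" by blast
    obtain v l where vS: "v \<in> S" and vG: "v \<bullet> (G *v v) = 1" and Tv: "T *v v = l *\<^sub>R v"
      using rayleigh_max[OF symG symB GT mu pd S _ x0] inv by blast
    have GTv: "G *v (T *v y) = B *v y" for y by (simp add: matrix_vector_mul_assoc GT)
    have TG: "(T *v y) \<bullet> (G *v z) = y \<bullet> (B *v z)" for y z
    proof -
      have "(T *v y) \<bullet> (G *v z) = (G *v (T *v y)) \<bullet> z"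
        using sym_inner[OF symG, of "T *v y" z] by simp
      also have "\<dots> = (B *v y) \<bullet> z" by (simp add: GTv)
      also have "\<dots> = y \<bullet> (B *v z)" by (rule sym_inner[OF symB])
      finally show ?thesis .
    qed
    have Bv: "B *v v = l *\<^sub>R (G *v v)"
      by (metis GTv Tv matrix_vector_mult_scaleR)
    have "v \<bullet> (B *v v) = l" using vG by (simp add: Bv)
    hence lm: "m \<le> l" "l \<le> M" using ray[of v] vG by auto
    define p where "p = phi l"
    have pc: "p^2 \<le> c^2"
    proof -
      have "\<bar>p\<bar> \<le> c" using phib[OF lm] by (simp add: p_def)
      hence "\<bar>p\<bar>^2 \<le> c^2" by (intro power_mono) auto
      thus ?thesis by simp
    qed
    define S' where "S' = {y \<in> S. y \<bullet> (G *v v) = 0}"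
    have S'sub: "subspace S'"
      using S unfolding S'_def subspace_def
      by (auto simp: inner_add_left)
    have S'inv: "\<forall>y\<in>S'. T *v y \<in> S'"
    proof
      fix y assume "y \<in> S'"
      hence yS: "y \<in> S" and yG: "y \<bullet> (G *v v) = 0" by (auto simp: S'_def)
      have "(T *v y) \<bullet> (G *v v) = y \<bullet> (B *v v)" by (rule TG)
      also have "\<dots> = 0" using yG by (simp add: Bv)
      finally show "T *v y \<in> S'" using inv yS by (simp add: S'_def)
    qed
    have "S' \<subseteq> S" "v \<notin> S'" using vG by (auto simp: S'_def)
    hence "S' \<subset> S" using vS by blast
    moreover have e1: "span S = S" "span S' = S'" using S S'sub span_eq_iff by blast+
    ultimately have "span S' \<subset> span S" by (simp only: e1)
    hence dimlt: "dim S' < dim S" by (rule dim_psubset)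
    define a where "a = x \<bullet> (G *v v)"
    define x' where "x' = x - a *\<^sub>R v"
    have x'S: "x' \<in> S'"
      unfolding S'_def x'_def using S xS vS vG
      by (auto simp: subspace_diff subspace_scale matrix_vector_mult_scaleR inner_diff_left a_def)
    have IH: "(F *v x') \<bullet> (G *v (F *v x')) \<le> c^2 * (x' \<bullet> (G *v x'))"
      using less.hyps[OF dimlt S'sub S'inv x'S] .
    have Fx'S: "F *v x' \<in> S'" using Finv[OF S'sub S'inv] x'S by blast
    hence Fx'G: "(F *v x') \<bullet> (G *v v) = 0" by (simp add: S'_def)
    have x'G: "x' \<bullet> (G *v v) = 0" using x'S by (simp add: S'_def)
    have xdec: "x = x' + a *\<^sub>R v" by (simp add: x'_def)
    have Fv: "F *v v = p *\<^sub>R v" using Feig[OF Tv] by (simp add: p_def)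
    have Fxdec: "F *v x = F *v x' + (a * p) *\<^sub>R v"
      by (subst xdec) (simp add: matrix_vector_right_distrib matrix_vector_mult_scaleR Fv)
    have "(F *v x) \<bullet> (G *v (F *v x)) = (F *v x') \<bullet> (G *v (F *v x')) + (a * p)^2"
      unfolding Fxdec quad_expand[OF symG] using vG
      using sym_inner[OF symG, of v "F *v x'"] Fx'G by (simp add: inner_commute)
    also have "\<dots> \<le> c^2 * (x' \<bullet> (G *v x')) + a^2 * c^2"
    proof -
      have "a^2 * p^2 \<le> a^2 * c^2" using pc by (intro mult_left_mono) auto
      thus ?thesis using IH by (simp add: power_mult_distrib)
    qed
    also have "\<dots> = c^2 * (x \<bullet> (G *v x))"
    proof -
      have "x \<bullet> (G *v x) = x' \<bullet> (G *v x') + a^2"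
        apply (subst (1 2) xdec)
        unfolding quad_expand[OF symG] using vG
        using sym_inner[OF symG, of v x'] x'G by (simp add: inner_commute)
      thus ?thesis by (simp add: algebra_simps)
    qed
    finally show ?thesis .
  qed
qed

fun cheb :: "nat \<Rightarrow> real \<Rightarrow> real" where
  "cheb 0 z = 1"
| "cheb (Suc 0) z = z"
| "cheb (Suc (Suc k)) z = 2 * z * cheb (Suc k) z - cheb k z"

lemma nat2_induct[case_names zero one step]:
  assumes "P 0" "P (Suc 0)" "\<And>k. P k \<Longrightarrow> P (Suc k) \<Longrightarrow> P (Suc (Suc k))"
  shows "P n"
proof -
  have "P n \<and> P (Suc n)" by (induction n) (use assms in auto)
  thus ?thesis by simp
qed

lemma cheb_cos: "cheb k (cos th) = cos (real k * th)"
proof (induction k rule: nat2_induct)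
  case (step k)
  have "cos (real (Suc (Suc k)) * th) = cos ((real (Suc k)) * th + th)" by (simp add: algebra_simps)
  moreover have "cos (real k * th) = cos ((real (Suc k)) * th - th)" by (simp add: algebra_simps)
  ultimately show ?case using step by (simp add: cos_add cos_diff)
qed auto

lemma cheb_bound: "\<bar>z\<bar> \<le> 1 \<Longrightarrow> \<bar>cheb k z\<bar> \<le> 1"
  using cheb_cos[of k "arccos z"] cos_arccos[of z] by (simp add: abs_le_iff)

lemma cheb_w:
  assumes "w * u = 1"
  shows "cheb k ((w + u) / 2) = (w^k + u^k) / 2"
proof (induction k rule: nat2_induct)
  case (step k)
  have "(w + u) * (w^Suc k + u^Suc k) = w^(Suc (Suc k)) + u^(Suc (Suc k)) + (w*u) * (w^k + u^k)"
    by (simp add: algebra_simps)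
  moreover have uw: "u * (w * x) = x" for x by (metis assms mult.assoc mult_1 mult.commute)
  ultimately show ?case using step assms by (simp add: field_simps uw)
qed auto

lemma mm_add_r: "((A::real^'n^'m) + B) ** C = A ** C + B ** C"
  by (simp add: matrix_matrix_mult_def vec_eq_iff sum.distrib algebra_simps)
lemma mm_diff_r: "((A::real^'n^'m) - B) ** C = A ** C - B ** C"
  by (simp add: matrix_matrix_mult_def vec_eq_iff sum_subtractf algebra_simps)
lemma mm_diff_l: "(A::real^'n^'m) ** (B - C) = A ** B - A ** C"
  by (simp add: matrix_matrix_mult_def vec_eq_iff sum_subtractf algebra_simps)
lemma mm_scale_l: "((c::real) *\<^sub>R (A::real^'n^'m)) ** B = c *\<^sub>R (A ** B)"
  by (simp add: matrix_matrix_mult_def vec_eq_iff sum_distrib_left algebra_simps)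
lemma mm_scale_r: "(A::real^'n^'m) ** ((c::real) *\<^sub>R B) = c *\<^sub>R (A ** B)"
  by (simp add: matrix_matrix_mult_def vec_eq_iff sum_distrib_left algebra_simps)
lemma mv_add_r: "((A::real^'n^'m) + B) *v x = A *v x + B *v x"
  by (simp add: matrix_vector_mult_add_rdistrib)
lemma mv_scale_l: "((c::real) *\<^sub>R (A::real^'n^'m)) *v x = c *\<^sub>R (A *v x)"
  by (simp add: matrix_vector_mult_def vec_eq_iff sum_distrib_left algebra_simps)

lemma mm_neg_l: "(- (A::real^'n^'m)) ** B = - (A ** B)"
  by (simp add: matrix_matrix_mult_def vec_eq_iff sum_negf)

lemmas mm_simps = mm_neg_l mm_add_r mm_diff_r mm_diff_l mm_scale_l mm_scale_r matrix_add_ldistrib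
  mv_scale_l matrix_vector_mult_diff_rdistrib mv_add_r

fun chm :: "real \<Rightarrow> real^'n^'n \<Rightarrow> nat \<Rightarrow> real^'n^'n" where
  "chm r T 0 = mat 1"
| "chm r T (Suc 0) = (1 / r) *\<^sub>R (mat 1 - T)"
| "chm r T (Suc (Suc k)) = 2 *\<^sub>R (chm r T (Suc k) ** ((1 / r) *\<^sub>R (mat 1 - T))) - chm r T k"

fun qm :: "real \<Rightarrow> real^'n^'n \<Rightarrow> nat \<Rightarrow> real^'n^'n" where
  "qm r T 0 = 0"
| "qm r T (Suc 0) = - (1 / r) *\<^sub>R mat 1"
| "qm r T (Suc (Suc k)) = (2 / r) *\<^sub>R (qm r T (Suc k) - chm r T (Suc k)) - qm r T k"

lemma chm_qm: "chm r T k = cheb k (1 / r) *\<^sub>R mat 1 + qm r T k ** T"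
proof (induction k rule: nat2_induct)
  case (step k)
  have "chm r T (Suc (Suc k)) = (2 / r) *\<^sub>R chm r T (Suc k) - (2 / r) *\<^sub>R (chm r T (Suc k) ** T) - chm r T k"
    by (simp add: mm_simps scaleR_diff_right)
  also have "\<dots> = (2 / r) *\<^sub>R (cheb (Suc k) (1 / r) *\<^sub>R mat 1 + qm r T (Suc k) ** T)
       - (2 / r) *\<^sub>R (chm r T (Suc k) ** T) - (cheb k (1 / r) *\<^sub>R mat 1 + qm r T k ** T)"
    using step by metis
  also have "\<dots> = cheb (Suc (Suc k)) (1 / r) *\<^sub>R mat 1 + qm r T (Suc (Suc k)) ** T"
    by (simp add: mm_simps algebra_simps)
  finally show ?case .
qed (auto simp: mm_simps algebra_simps)

lemma chm_eig:
  assumes "T *v v = l *\<^sub>R v"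
  shows "chm r T k *v v = cheb k ((1 - l) / r) *\<^sub>R v"
proof (induction k rule: nat2_induct)
  case one thus ?case using assms by (simp add: mm_simps algebra_simps diff_divide_distrib)
next
  case (step k)
  have Y: "((1 / r) *\<^sub>R (mat 1 - T)) *v v = ((1 - l) / r) *\<^sub>R v"
    using assms by (simp add: mm_simps algebra_simps diff_divide_distrib)
  have "chm r T (Suc (Suc k)) *v v = 2 *\<^sub>R (chm r T (Suc k) *v (((1 / r) *\<^sub>R (mat 1 - T)) *v v)) - chm r T k *v v"
    by (simp add: mm_simps matrix_vector_mul_assoc matrix_vector_mult_scaleR matrix_vector_mult_diff_distrib scaleR_diff_right)
  thus ?case using step Y by (simp add: matrix_vector_mult_scaleR algebra_simps)
qed auto

lemma chm_inv:
  assumes S: "subspace S" and inv: "\<forall>x\<in>S. T *v x \<in> S"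
  shows "\<forall>x\<in>S. chm r T k *v x \<in> S"
proof (induction k rule: nat2_induct)
  case zero thus ?case by simp
next
  case one thus ?case using S inv
    by (simp add: mm_simps subspace_scale subspace_diff)
next
  case (step k)
  show ?case
  proof
    fix x assume xS: "x \<in> S"
    have Yx: "((1 / r) *\<^sub>R (mat 1 - T)) *v x \<in> S"
      using S inv xS by (simp add: mm_simps subspace_scale subspace_diff)
    have "chm r T (Suc (Suc k)) *v x = 2 *\<^sub>R (chm r T (Suc k) *v (((1 / r) *\<^sub>R (mat 1 - T)) *v x)) - chm r T k *v x"
      by (simp add: mm_simps matrix_vector_mul_assoc matrix_vector_mult_scaleR matrix_vector_mult_diff_distrib scaleR_diff_right)
    thus "chm r T (Suc (Suc k)) *v x \<in> S"
      using step Yx xS S by (simp add: subspace_scale subspace_diff)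
  qed
qed

definition bw :: "real^('w::{finite,linorder} \<times> 'b::finite)^('w \<times> 'b) \<Rightarrow> nat \<Rightarrow> bool" where
  "bw X k \<longleftrightarrow> (\<forall>p p'. k < blk_dist (fst p) (fst p') \<longrightarrow> X $ p $ p' = 0)"

lemma blk_dist_tri: "blk_dist i j \<le> blk_dist i c + blk_dist c j"
  unfolding blk_dist_def by linarith

lemma blk_dist_self[simp]: "blk_dist i i = 0"
  unfolding blk_dist_def by simp

lemma bw_mono: "bw X k \<Longrightarrow> k \<le> l \<Longrightarrow> bw X l"
  unfolding bw_def by auto

lemma bw_mult:
  fixes X Y :: "real^('w::{finite,linorder} \<times> 'b::finite)^('w \<times> 'b)"
  assumes "bw X k" "bw Y l"
  shows "bw (X ** Y) (k + l)"
  unfolding bw_def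
proof (intro allI impI)
  fix p p' :: "'w \<times> 'b"
  assume d: "k + l < blk_dist (fst p) (fst p')"
  have z: "X $ p $ c * Y $ c $ p' = 0" for c :: "'w \<times> 'b"
  proof -
    have "k < blk_dist (fst p) (fst c) \<or> l < blk_dist (fst c) (fst p')"
      using blk_dist_tri[of "fst p" "fst p'" "fst c"] d by linarith
    thus ?thesis using assms unfolding bw_def by (metis mult_zero_left mult_zero_right)
  qed
  have "(X ** Y) $ p $ p' = (\<Sum>c\<in>UNIV. X $ p $ c * Y $ c $ p')" by (simp add: matrix_matrix_mult_def)
  also have "\<dots> = 0" by (rule sum.neutral) (use z in blast)
  finally show "(X ** Y) $ p $ p' = 0" .
qed

lemma bw_add: "bw X k \<Longrightarrow> bw Y k \<Longrightarrow> bw (X + Y) k"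
  unfolding bw_def by auto
lemma bw_diff: "bw X k \<Longrightarrow> bw Y k \<Longrightarrow> bw (X - Y) k"
  unfolding bw_def by auto
lemma bw_scale: "bw X k \<Longrightarrow> bw (c *\<^sub>R X) k"
  unfolding bw_def by auto
lemma bw_neg: "bw X k \<Longrightarrow> bw (- X) k"
  unfolding bw_def by auto
lemma bw_zero: "bw 0 k"
  unfolding bw_def by auto
lemma bw_mat: "bw (mat c) k"
  unfolding bw_def by (auto simp: mat_def)

lemma bw_chm:
  assumes "bw T h"
  shows "bw (chm r T k) (k * h)"
proof (induction k rule: nat2_induct)
  case zero thus ?case by (simp add: bw_mat)
next
  case one thus ?case using assms by (simp add: bw_scale bw_diff bw_mat)
next
  case (step k)
  have "bw ((1 / r) *\<^sub>R (mat 1 - T)) h" using assms by (simp add: bw_scale bw_diff bw_mat)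
  hence "bw (chm r T (Suc k) ** ((1 / r) *\<^sub>R (mat 1 - T))) (Suc k * h + h)"
    using step bw_mult by blast
  hence a: "bw (2 *\<^sub>R (chm r T (Suc k) ** ((1 / r) *\<^sub>R (mat 1 - T)))) (Suc (Suc k) * h)"
    by (simp add: bw_scale add.commute)
  have b: "bw (chm r T k) (Suc (Suc k) * h)" using step(1) by (rule bw_mono) simp
  show ?case using a b by (simp add: bw_diff)
qed

lemma bw_qm:
  assumes "bw T h"
  shows "bw (qm r T k) ((k - 1) * h)"
proof (induction k rule: nat2_induct)
  case zero thus ?case by (simp add: bw_zero)
next
  case one thus ?case by (simp add: bw_scale bw_mat bw_neg)
next
  case (step k)
  have a: "bw (qm r T (Suc k)) (Suc k * h)" using step(2) by (rule bw_mono) simp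
  have "(k - 1) * h \<le> Suc k * h" by (intro mult_right_mono) auto
  have b: "bw (chm r T (Suc k)) (Suc k * h)" using bw_chm[OF assms] .
  have c: "bw (qm r T k) (Suc k * h)" using step(1) \<open>(k - 1) * h \<le> Suc k * h\<close> by (rule bw_mono)
  show ?case using a b c by (simp add: bw_scale bw_diff)
qed

lemma sum_pair: "(\<Sum>p\<in>UNIV. f p) = (\<Sum>i\<in>UNIV. \<Sum>a\<in>UNIV. f (i, a))"
  by (simp add: sum.cartesian_product)

lemma sum_blockdiag:
  fixes f :: "('w::finite \<times> 'b::finite) \<Rightarrow> ('w \<times> 'b) \<Rightarrow> real"
  assumes "\<And>p p'. fst p \<noteq> fst p' \<Longrightarrow> f p p' = 0"
  shows "(\<Sum>p\<in>UNIV. \<Sum>p'\<in>UNIV. f p p') = (\<Sum>i\<in>UNIV. \<Sum>a\<in>UNIV. \<Sum>b\<in>UNIV. f (i, a) (i, b))"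
proof -
  have "(\<Sum>p'\<in>UNIV. f p p') = (\<Sum>b\<in>UNIV. f p (fst p, b))" for p
  proof -
    have "(\<Sum>p'\<in>UNIV. f p p') = (\<Sum>j\<in>UNIV. \<Sum>b\<in>UNIV. f p (j, b))" by (rule sum_pair)
    also have "\<dots> = (\<Sum>j\<in>UNIV. if j = fst p then (\<Sum>b\<in>UNIV. f p (j, b)) else 0)"
      by (rule sum.cong) (auto simp: assms)
    also have "\<dots> = (\<Sum>b\<in>UNIV. f p (fst p, b))" by simp
    finally show ?thesis .
  qed
  hence "(\<Sum>p\<in>UNIV. \<Sum>p'\<in>UNIV. f p p') = (\<Sum>p\<in>UNIV. \<Sum>b\<in>UNIV. f p (fst p, b))" by simp
  also have "\<dots> = (\<Sum>i\<in>UNIV. \<Sum>a\<in>UNIV. \<Sum>b\<in>UNIV. f (i, a) (i, b))"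
    using sum_pair[of "\<lambda>p. \<Sum>b\<in>UNIV. f p (fst p, b)"] by simp
  finally show ?thesis .
qed

lemma blockdiag_quad:
  fixes D :: "real^('w::finite \<times> 'b::finite)^('w \<times> 'b)"
  assumes "\<And>p p'. fst p \<noteq> fst p' \<Longrightarrow> D $ p $ p' = 0"
  shows "x \<bullet> (D *v x) = (\<Sum>i\<in>UNIV. (\<chi> a. x $ (i, a)) \<bullet> (blk D i i *v (\<chi> a. x $ (i, a))))"
proof -
  have "x \<bullet> (D *v x) = (\<Sum>p\<in>UNIV. \<Sum>p'\<in>UNIV. x $ p * D $ p $ p' * x $ p')"
    by (simp add: inner_vec_def matrix_vector_mult_def sum_distrib_left mult.assoc)
  also have "\<dots> = (\<Sum>i\<in>UNIV. \<Sum>a\<in>UNIV. \<Sum>b\<in>UNIV. x $ (i, a) * D $ (i, a) $ (i, b) * x $ (i, b))"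
    by (rule sum_blockdiag) (simp add: assms)
  also have "\<dots> = (\<Sum>i\<in>UNIV. (\<chi> a. x $ (i, a)) \<bullet> (blk D i i *v (\<chi> a. x $ (i, a))))"
    by (simp add: inner_vec_def matrix_vector_mult_def blk_def sum_distrib_left mult.assoc)
  finally show ?thesis .
qed

lemma invertible_inv:
  fixes M :: "real^'n^'n"
  assumes "invertible M"
  shows "M ** matrix_inv M = mat 1" "matrix_inv M ** M = mat 1"
proof -
  have "\<exists>M'. M ** M' = mat 1 \<and> M' ** M = mat 1" using assms by (simp add: invertible_def)
  hence "M ** matrix_inv M = mat 1 \<and> matrix_inv M ** M = mat 1"
    unfolding matrix_inv_def by (rule someI_ex)
  thus "M ** matrix_inv M = mat 1" "matrix_inv M ** M = mat 1" by auto
qed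

lemma pd_invertible:
  fixes M :: "real^'n^'n"
  assumes "\<And>x. x \<noteq> 0 \<Longrightarrow> 0 < x \<bullet> (M *v x)"
  shows "invertible M"
proof -
  have "inj ((*v) M)"
  proof (rule injI)
    fix x y assume "M *v x = M *v y"
    hence "M *v (x - y) = 0" by (simp add: matrix_vector_mult_diff_distrib)
    hence "(x - y) \<bullet> (M *v (x - y)) = 0" by simp
    thus "x = y" using assms[of "x - y"] by (cases "x = y") auto
  qed
  thus ?thesis by (simp add: invertible_left_inverse matrix_left_invertible_injective)
qed


lemma sym_eig_orth:
  fixes A :: "real^'n^'n"
  assumes "sym_mat A" "A *v v = l *\<^sub>R v" "A *v w = m *\<^sub>R w" "l \<noteq> m"
  shows "v \<bullet> w = 0"
proof -
  have "l * (v \<bullet> w) = (A *v v) \<bullet> w" using assms by simp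
  also have "\<dots> = v \<bullet> (A *v w)" by (rule sym_inner[OF assms(1)])
  also have "\<dots> = m * (v \<bullet> w)" using assms by simp
  finally show ?thesis using assms(4) by simp
qed

lemma spec_finite:
  fixes A :: "real^'n^'n"
  assumes symA: "sym_mat A"
  shows "finite (mat_spectrum A)"
proof -
  define f where "f l = (SOME v. v \<noteq> 0 \<and> A *v v = l *\<^sub>R v)" for l
  have fP: "f l \<noteq> 0 \<and> A *v f l = l *\<^sub>R f l" if "l \<in> mat_spectrum A" for l
    using that unfolding f_def mat_spectrum_def by (rule CollectE) (rule someI_ex)
  have injf: "inj_on f (mat_spectrum A)"
  proof (rule inj_onI)
    fix l m assume l: "l \<in> mat_spectrum A" and m: "m \<in> mat_spectrum A" and e: "f l = f m"
    show "l = m"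
    proof (rule ccontr)
      assume "l \<noteq> m"
      hence "f l \<bullet> f m = 0" using sym_eig_orth[OF symA] fP[OF l] fP[OF m] by blast
      thus False using e fP[OF l] by simp
    qed
  qed
  have "pairwise orthogonal (f ` mat_spectrum A)"
    unfolding pairwise_def orthogonal_def
    using sym_eig_orth[OF symA] fP by blast
  moreover have "0 \<notin> f ` mat_spectrum A" using fP by auto
  ultimately have "independent (f ` mat_spectrum A)" by (rule pairwise_orthogonal_independent)
  hence "finite (f ` mat_spectrum A)" by (rule independent_imp_finite)
  thus ?thesis using injf by (rule finite_imageD)
qed

lemma spec_rayleigh_max:
  fixes A :: "real^'n^'n"
  assumes symA: "sym_mat A"
  shows "\<exists>l\<in>mat_spectrum A. \<forall>x. x \<bullet> (A *v x) \<le> l * (norm x)^2"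
proof -
  have x0: "(vec 1 :: real^'n) \<noteq> 0" by (simp add: vec_eq_iff)
  have sym1: "sym_mat (mat 1 :: real^'n^'n)" by (simp add: sym_mat_def transpose_mat)
  obtain v l where v: "v \<bullet> (mat 1 *v v) = 1" "A *v v = l *\<^sub>R v"
     and b: "\<forall>x\<in>UNIV. x \<bullet> (A *v x) \<le> l * (x \<bullet> (mat 1 *v x))"
    using rayleigh_max[OF sym1 symA _ zero_less_one _ subspace_UNIV _ _ x0, of A]
    by (auto simp: power2_norm_eq_inner)
  have "v \<noteq> 0" using v(1) by auto
  hence "l \<in> mat_spectrum A" using v(2) by (auto simp: mat_spectrum_def)
  moreover have "\<forall>x. x \<bullet> (A *v x) \<le> l * (norm x)^2" using b by (simp add: power2_norm_eq_inner)
  ultimately show ?thesis by blast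
qed

lemma spec_rayleigh_min:
  fixes A :: "real^'n^'n"
  assumes symA: "sym_mat A"
  shows "\<exists>l\<in>mat_spectrum A. \<forall>x. l * (norm x)^2 \<le> x \<bullet> (A *v x)"
proof -
  have "sym_mat (- A)" using symA by (simp add: sym_mat_def transpose_def vec_eq_iff)
  then obtain l where l: "l \<in> mat_spectrum (- A)" and b: "\<forall>x. x \<bullet> ((- A) *v x) \<le> l * (norm x)^2"
    using spec_rayleigh_max by blast
  have nA: "(- A) *v x = - (A *v x)" for x by (simp add: matrix_vector_mult_def vec_eq_iff sum_negf)
  have "- l \<in> mat_spectrum A"
    using l unfolding mat_spectrum_def by (auto simp: nA) (metis minus_equation_iff scaleR_minus_left)
  moreover have "\<forall>x. (- l) * (norm x)^2 \<le> x \<bullet> (A *v x)"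
  proof
    fix x have "- (x \<bullet> (A *v x)) \<le> l * (norm x)^2" using b[rule_format, of x] by (simp add: nA)
    thus "(- l) * (norm x)^2 \<le> x \<bullet> (A *v x)" by linarith
  qed
  ultimately show ?thesis by blast
qed

lemma blockdiag_inv:
  fixes G :: "real^('w::{finite,linorder} \<times> 'b::finite)^('w \<times> 'b)"
  assumes bd: "\<And>p p'. fst p \<noteq> fst p' \<Longrightarrow> G $ p $ p' = 0"
    and inv: "\<And>i. invertible (blk G i i)"
  shows "\<exists>H. G ** H = mat 1 \<and> bw H 0"
proof -
  define M where "M i = matrix_inv (blk G i i)" for i
  have M: "blk G i i ** M i = mat 1" for i using invertible_inv(1)[OF inv] by (simp add: M_def)
  define H :: "real^('w \<times> 'b)^('w \<times> 'b)" where
    "H = (\<chi> p p'. if fst p = fst p' then M (fst p) $ snd p $ snd p' else 0)"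
  have "bw H 0" unfolding bw_def H_def by (auto)
  moreover have "G ** H = mat 1"
  proof -
    have "(G ** H) $ (i, a) $ (j, c) = mat 1 $ (i, a) $ (j, c)" for i a j c
    proof -
      have "(G ** H) $ (i, a) $ (j, c) = (\<Sum>k\<in>UNIV. \<Sum>b\<in>UNIV. G $ (i, a) $ (k, b) * H $ (k, b) $ (j, c))"
        by (simp add: matrix_matrix_mult_def sum_pair[where f = "\<lambda>p. G $ (i, a) $ p * H $ p $ (j, c)"])
      also have "\<dots> = (\<Sum>k\<in>UNIV. if k = j then (\<Sum>b\<in>UNIV. G $ (i, a) $ (j, b) * M j $ b $ c) else 0)"
        by (rule sum.cong) (auto simp: H_def)
      also have "\<dots> = (\<Sum>b\<in>UNIV. G $ (i, a) $ (j, b) * M j $ b $ c)" by simp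
      also have "\<dots> = mat 1 $ (i, a) $ (j, c)"
      proof (cases "i = j")
        case True
        have "(\<Sum>b\<in>UNIV. G $ (i, a) $ (j, b) * M j $ b $ c) = (blk G j j ** M j) $ a $ c"
          using True by (simp add: matrix_matrix_mult_def blk_def)
        thus ?thesis using True M[of j] by (simp add: mat_def)
      next
        case False
        thus ?thesis using bd[of "(i, a)" "(j, b)" for b] by (simp add: mat_def bd)
      qed
      finally show ?thesis .
    qed
    thus ?thesis by (simp add: vec_eq_iff)
  qed
  ultimately show ?thesis by blast
qed

lemma aux_WU: "0 < (W::real) \<Longrightarrow> 0 < U \<Longrightarrow> W * U = 1 \<Longrightarrow> 1/((W+U)/2) \<le> 2*U"
proof -
  assume a: "0 < W" "0 < U" "W * U = 1"
  have "1 \<le> (W + U) * U" using a by (simp add: algebra_simps)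
  hence "2 \<le> 2 * U * (W + U)" by (simp add: algebra_simps)
  thus ?thesis using a by (simp add: divide_le_eq)
qed

lemma cheb_const:
  fixes a0 b0 :: real
  assumes a0: "0 < a0" and ab: "a0 < b0"
  defines "u \<equiv> (sqrt (b0 / a0) - 1) / (sqrt (b0 / a0) + 1)"
  shows "0 < u" "u < 1" "0 < cheb k ((a0 + b0) / (b0 - a0))"
    "1 / cheb k ((a0 + b0) / (b0 - a0)) \<le> 2 * u ^ k"
proof -
  define sa where "sa = sqrt a0"
  define sb where "sb = sqrt b0"
  have sa: "0 < sa" using a0 by (simp add: sa_def)
  have sab: "sa < sb" using a0 ab by (simp add: sa_def sb_def)
  have sa2: "sa^2 = a0" using a0 by (simp add: sa_def)
  have sb2: "sb^2 = b0" using a0 ab by (simp add: sb_def)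
  have ueq: "u = (sb - sa) / (sb + sa)"
  proof -
    have s: "sqrt (b0 / a0) = sb / sa" by (simp add: sa_def sb_def real_sqrt_divide)
    have n: "sb / sa - 1 = (sb - sa) / sa" using sa by (simp add: field_simps)
    have d: "sb / sa + 1 = (sb + sa) / sa" using sa by (simp add: field_simps)
    show ?thesis unfolding u_def s n d using sa by simp
  qed
  show upos: "0 < u" using ueq sa sab by simp
  show "u < 1" using ueq sa sab by simp
  define w where "w = (sb + sa) / (sb - sa)"
  have wpos: "0 < w" using sa sab by (simp add: w_def)
  have wu: "w * u = 1" using sa sab by (simp add: w_def ueq)
  have z: "(a0 + b0) / (b0 - a0) = (w + u) / 2"
  proof -
    have "w + u = ((sb+sa)^2 + (sb-sa)^2)/((sb-sa)*(sb+sa))"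
      using sa sab unfolding w_def ueq by (simp add: add_divide_eq_iff divide_add_eq_iff power2_eq_square)
    also have "\<dots> = (2*(sa^2 + sb^2))/(sb^2 - sa^2)" by (simp add: power2_eq_square algebra_simps)
    finally have h: "w + u = 2 * (a0 + b0) / (b0 - a0)" using sa2 sb2 by (simp add: add.commute)
    have e: "(2 * x / y) / 2 = x / (y::real)" for x y by simp
    show ?thesis unfolding h e ..
  qed
  have c: "cheb k ((a0 + b0) / (b0 - a0)) = (w^k + u^k) / 2" unfolding z by (rule cheb_w[OF wu])
  have wk: "0 < w^k" using wpos by simp
  have uk: "0 < u^k" using upos by simp
  show "0 < cheb k ((a0 + b0) / (b0 - a0))" unfolding c using wk uk by simp
  have WU: "w^k * u^k = 1" using wu by (metis power_mult_distrib power_one)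
  have "1 / ((w^k + u^k) / 2) \<le> 2 * u^k" by (rule aux_WU[OF wk uk WU])
  thus "1 / cheb k ((a0 + b0) / (b0 - a0)) \<le> 2 * u ^ k" unfolding c .
qed

lemma proj_norm: "norm (blk_proj S x) \<le> norm x"
  by (rule norm_le_componentwise_cart) (simp add: blk_proj_def)

lemma band_zero:
  assumes "bw Z m" "\<forall>i\<in>SR. \<forall>j\<in>SC. m < blk_dist i j"
  shows "blk_proj SR (Z *v blk_proj SC x) = 0"
proof -
  have "(Z *v blk_proj SC x) $ p = 0" if "fst p \<in> SR" for p
  proof -
    have "Z $ p $ p' * blk_proj SC x $ p' = 0" for p'
    proof (cases "fst p' \<in> SC")
      case True hence "m < blk_dist (fst p) (fst p')" using assms(2) that by blast
      hence "Z $ p $ p' = 0" using assms(1) unfolding bw_def by blast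
      thus ?thesis by simp
    next
      case False thus ?thesis by (simp add: blk_proj_def)
    qed
    hence "(\<Sum>p'\<in>UNIV. Z $ p $ p' * blk_proj SC x $ p') = 0" by (intro sum.neutral) blast
    thus ?thesis by (simp add: matrix_vector_mult_def)
  qed
  thus ?thesis by (simp add: blk_proj_def vec_eq_iff)
qed

lemma err_bound:
  fixes G B T Binv :: "real^'n^'n"
  assumes symG: "sym_mat G" and symB: "sym_mat B" and GT: "G ** T = B"
    and al: "0 < al" and pd: "\<And>x. al * (norm x)^2 \<le> x \<bullet> (G *v x)"
    and rho: "0 < rho" "rho < 1"
    and ray: "\<And>x. (1 - rho) * (x \<bullet> (G *v x)) \<le> x \<bullet> (B *v x) \<and> x \<bullet> (B *v x) \<le> (1 + rho) * (x \<bullet> (G *v x))"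
    and a0: "0 < a0" and aB: "\<And>x. a0 * (norm x)^2 \<le> x \<bullet> (B *v x)"
    and ar: "al * (1 - rho) = a0"
    and Binv: "B ** Binv = mat 1"
  shows "norm (chm rho T k *v (Binv *v x)) \<le> norm x / a0"
proof -
  define y where "y = Binv *v x"
  have By: "B *v y = x" unfolding y_def by (simp add: matrix_vector_mul_assoc Binv)
  define F where "F = chm rho T k"
  have Fb: "(F *v y) \<bullet> (G *v (F *v y)) \<le> 1^2 * (y \<bullet> (G *v y))"
  proof (rule spectral_bound[OF symG symB GT al pd ray, where phi = "\<lambda>l. cheb k ((1 - l) / rho)" and S = UNIV])
    show "\<forall>x\<in>S. F *v x \<in> S" if "subspace S" "\<forall>x\<in>S. T *v x \<in> S" for S
      unfolding F_def using chm_inv[OF that] by blast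
    show "F *v v = cheb k ((1 - l) / rho) *\<^sub>R v" if "T *v v = l *\<^sub>R v" for v l
      unfolding F_def by (rule chm_eig[OF that])
    show "\<bar>cheb k ((1 - l) / rho)\<bar> \<le> 1" if "1 - rho \<le> l" "l \<le> 1 + rho" for l
    proof (rule cheb_bound)
      have r: "0 < rho" by (rule rho(1))
      have u1: "(1 - l) / rho \<le> 1" using r that by (simp only: pos_divide_le_eq; linarith)
      have u2: "-1 \<le> (1 - l) / rho" using r that by (simp only: pos_le_divide_eq; linarith)
      show "\<bar>(1 - l) / rho\<bar> \<le> 1" using u1 u2 by (intro abs_leI) linarith+
    qed
  qed (simp_all add: subspace_UNIV)
  have yB: "y \<bullet> (B *v y) \<le> norm y * norm x" unfolding By by (rule norm_cauchy_schwarz)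
  have ny: "norm y \<le> norm x / a0"
  proof (cases "y = 0")
    case True thus ?thesis using a0 by simp
  next
    case False
    have "a0 * (norm y)^2 \<le> norm y * norm x" using aB[of y] yB by linarith
    hence "norm y * (a0 * norm y) \<le> norm y * norm x" by (simp add: power2_eq_square algebra_simps)
    moreover have "0 < norm y" using False by simp
    ultimately have "a0 * norm y \<le> norm x" by (rule mult_left_le_imp_le)
    thus ?thesis using a0 by (simp add: pos_le_divide_eq mult.commute)
  qed
  have yB2: "y \<bullet> (B *v y) \<le> (norm x)^2 / a0"
  proof -
    have "norm y * norm x \<le> (norm x / a0) * norm x" using ny by (intro mult_right_mono) auto
    moreover have "(norm x / a0) * norm x = (norm x)^2 / a0" by (simp add: power2_eq_square)
    ultimately show ?thesis using yB by linarith
  qed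
  have yG: "(1 - rho) * (y \<bullet> (G *v y)) \<le> (norm x)^2 / a0" using ray[of y] yB2 by linarith
  have s1: "al * (norm (F *v y))^2 \<le> y \<bullet> (G *v y)" using pd[of "F *v y"] Fb by simp
  have s2: "(1 - rho) * (al * (norm (F *v y))^2) \<le> (1 - rho) * (y \<bullet> (G *v y))"
    using rho s1 by (intro mult_left_mono) auto
  have s3: "(1 - rho) * (al * (norm (F *v y))^2) = a0 * (norm (F *v y))^2"
    by (metis ar mult.assoc mult.commute)
  have s4: "a0 * (norm (F *v y))^2 \<le> (norm x)^2 / a0" using s2 s3 yG by linarith
  have s5: "(norm (F *v y))^2 * a0 \<le> (norm x)^2 / a0" using s4 by (simp only: mult.commute)
  have s6: "(norm (F *v y))^2 \<le> ((norm x)^2 / a0) / a0" using a0 s5 by (simp only: pos_le_divide_eq)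
  have s7: "((norm x)^2 / a0) / a0 = (norm x / a0)^2" by (simp add: power_divide power2_eq_square)
  have s8: "0 \<le> norm x / a0" using a0 by simp
  have "norm (F *v y) \<le> norm x / a0" using s6 s7 s8 power2_le_imp_le by metis
  thus ?thesis by (simp add: F_def y_def)
qed

lemma blockdiag_sym:
  fixes D :: "real^('w::finite \<times> 'b::finite)^('w \<times> 'b)"
  assumes bd: "\<And>p p'. fst p \<noteq> fst p' \<Longrightarrow> D $ p $ p' = 0"
    and s: "\<And>i. sym_mat (blk D i i)"
  shows "sym_mat D"
proof -
  have "D $ p' $ p = D $ p $ p'" for p p'
  proof (cases "fst p = fst p'")
    case True
    obtain i a where p: "p = (i, a)" by (cases p)
    obtain j b where p': "p' = (j, b)" by (cases p')
    have ij: "j = i" using True p p' by simp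
    have "transpose (blk D i i) $ a $ b = blk D i i $ a $ b" using s[of i] by (simp add: sym_mat_def)
    thus ?thesis using p p' ij by (simp add: transpose_def blk_def)
  next
    case False thus ?thesis using bd[of p p'] bd[of p' p] by auto
  qed
  thus ?thesis by (simp add: sym_mat_def transpose_def vec_eq_iff)
qed

lemma blk_proj_diff: "blk_proj S (a - b) = blk_proj S a - blk_proj S b"
  by (simp add: blk_proj_def vec_eq_iff)
lemma blk_proj_scale: "blk_proj S (c *\<^sub>R a) = c *\<^sub>R blk_proj S a"
  by (simp add: blk_proj_def vec_eq_iff)
lemma blk_proj_zero: "blk_proj S 0 = 0"
  by (simp add: blk_proj_def vec_eq_iff)

theorem lemma3:
  fixes A D :: "real^('w::{finite,linorder} \<times> 'b::finite)^('w \<times> 'b)"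
    and q :: nat and a0 b0 :: real and SR SC :: "'w set"
  assumes A_pd: "pos_def_mat A"
    and q_pos: "0 < q" and q_even: "even q"
    and A_band: "\<forall>i j. 2 * blk_dist i j > q \<longrightarrow> blk A i j = 0"
    and a0_def: "a0 = Min (mat_spectrum A)" and b0_def: "b0 = Max (mat_spectrum A)"
    and a0_pos: "0 < a0" and a0_b0: "a0 < b0"
    and D_diag: "\<forall>i j. i \<noteq> j \<longrightarrow> blk D i j = 0"
    and D_psd: "\<forall>i. pos_semidef_mat (blk D i i)"
    and SR_ne: "SR \<noteq> {}" and SC_ne: "SC \<noteq> {}"
  shows "blk_sub_norm (matrix_inv (A + D)) SR SC
           \<le> (2 / a0) * (((sqrt (b0 / a0) - 1) / (sqrt (b0 / a0) + 1)) powr (2 / real q))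
               ^ Min {blk_dist i j | i j. i \<in> SR \<and> j \<in> SC}"
proof -
  have symA: "sym_mat A" using A_pd by (simp add: pos_def_mat_def)
  have finS: "finite (mat_spectrum A)" by (rule spec_finite[OF symA])
  obtain lM where lM: "lM \<in> mat_spectrum A" "\<forall>x. x \<bullet> (A *v x) \<le> lM * (norm x)^2"
    using spec_rayleigh_max[OF symA] by blast
  obtain lm where lm: "lm \<in> mat_spectrum A" "\<forall>x. lm * (norm x)^2 \<le> x \<bullet> (A *v x)"
    using spec_rayleigh_min[OF symA] by blast
  have "lM \<le> b0" unfolding b0_def using finS lM(1) by simp
  have "a0 \<le> lm" unfolding a0_def using finS lm(1) by simp
  have Aup: "x \<bullet> (A *v x) \<le> b0 * (norm x)^2" for x
  proof -
    have "lM * (norm x)^2 \<le> b0 * (norm x)^2" using \<open>lM \<le> b0\<close> by (intro mult_right_mono) auto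
    thus ?thesis using lM(2) by (meson order_trans)
  qed
  have Alo: "a0 * (norm x)^2 \<le> x \<bullet> (A *v x)" for x
  proof -
    have "a0 * (norm x)^2 \<le> lm * (norm x)^2" using \<open>a0 \<le> lm\<close> by (intro mult_right_mono) auto
    thus ?thesis using lm(2) by (meson order_trans)
  qed
  have Dblk: "D $ p $ p' = 0" if "fst p \<noteq> fst p'" for p p'
  proof -
    obtain i a where p: "p = (i, a)" by (cases p)
    obtain j b where p': "p' = (j, b)" by (cases p')
    have "blk D i j = 0" using D_diag that p p' by simp
    hence "blk D i j $ a $ b = 0" by simp
    thus ?thesis using p p' by (simp add: blk_def)
  qed
  have symD: "sym_mat D"
    by (rule blockdiag_sym[OF Dblk]) (use D_psd in \<open>auto simp: pos_semidef_mat_def\<close>)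
  have Dpsd: "0 \<le> x \<bullet> (D *v x)" for x
  proof -
    have "x \<bullet> (D *v x) = (\<Sum>i\<in>UNIV. (\<chi> a. x $ (i, a)) \<bullet> (blk D i i *v (\<chi> a. x $ (i, a))))"
      by (rule blockdiag_quad[OF Dblk])
    also have "\<dots> \<ge> 0" using D_psd by (intro sum_nonneg) (simp add: pos_semidef_mat_def)
    finally show ?thesis .
  qed
  define al where "al = (a0 + b0) / 2"
  define rho where "rho = (b0 - a0) / (a0 + b0)"
  have al: "0 < al" using a0_pos a0_b0 by (simp add: al_def)
  have rho: "0 < rho" "rho < 1" using a0_pos a0_b0 by (simp_all add: rho_def)
  have ar: "al * (1 - rho) = a0" using a0_pos a0_b0 by (simp add: al_def rho_def field_simps)
  have ar2: "al * (1 + rho) = b0" using a0_pos a0_b0 by (simp add: al_def rho_def field_simps)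
  have irho: "1 / rho = (a0 + b0) / (b0 - a0)" by (simp add: rho_def)
  define G where "G = al *\<^sub>R mat 1 + D"
  have Gq: "x \<bullet> (G *v x) = al * (norm x)^2 + x \<bullet> (D *v x)" for x
    by (simp add: G_def mv_add_r mv_scale_l inner_add_right power2_norm_eq_inner)
  have symG: "sym_mat G" using symD
    by (simp add: G_def sym_mat_def transpose_def vec_eq_iff mat_def)
  have Gblk: "G $ p $ p' = 0" if "fst p \<noteq> fst p'" for p p'
    using Dblk[OF that] that by (auto simp: G_def mat_def)
  have Ginv: "invertible (blk G i i)" for i
  proof (rule pd_invertible)
    fix x :: "real^'b" assume "x \<noteq> 0"
    have e: "blk G i i = al *\<^sub>R mat 1 + blk D i i"
      by (simp add: G_def blk_def vec_eq_iff mat_def)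
    have "0 \<le> x \<bullet> (blk D i i *v x)" using D_psd by (simp add: pos_semidef_mat_def)
    moreover have "0 < al * (norm x)^2" using al \<open>x \<noteq> 0\<close> by simp
    ultimately show "0 < x \<bullet> (blk G i i *v x)"
      unfolding e by (simp add: mv_add_r mv_scale_l inner_add_right power2_norm_eq_inner)
  qed
  obtain H where GH: "G ** H = mat 1" and bwH: "bw H 0"
    using blockdiag_inv[OF Gblk Ginv] by blast
  define B where "B = A + D"
  have symB: "sym_mat B" using symA symD by (simp add: B_def sym_mat_def transpose_def vec_eq_iff)
  have Bq: "x \<bullet> (B *v x) = x \<bullet> (A *v x) + x \<bullet> (D *v x)" for x
    by (simp add: B_def mv_add_r inner_add_right)
  have pdG: "al * (norm x)^2 \<le> x \<bullet> (G *v x)" for x using Gq[of x] Dpsd[of x] by linarith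
  have aB: "a0 * (norm x)^2 \<le> x \<bullet> (B *v x)" for x using Bq[of x] Dpsd[of x] Alo[of x] by linarith
  have ray: "(1 - rho) * (x \<bullet> (G *v x)) \<le> x \<bullet> (B *v x) \<and> x \<bullet> (B *v x) \<le> (1 + rho) * (x \<bullet> (G *v x))" for x
  proof -
    define n where "n = (norm x)^2"
    define dq where "dq = x \<bullet> (D *v x)"
    have dq: "0 \<le> dq" using Dpsd by (simp add: dq_def)
    have e1: "(1 - rho) * (x \<bullet> (G *v x)) = a0 * n + (1 - rho) * dq"
    proof -
      have "(1 - rho) * (x \<bullet> (G *v x)) = (al * (1 - rho)) * n + (1 - rho) * dq"
        unfolding Gq n_def[symmetric] dq_def[symmetric] by (simp add: algebra_simps)
      thus ?thesis by (simp only: ar)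
    qed
    have e2: "(1 + rho) * (x \<bullet> (G *v x)) = b0 * n + (1 + rho) * dq"
    proof -
      have "(1 + rho) * (x \<bullet> (G *v x)) = (al * (1 + rho)) * n + (1 + rho) * dq"
        unfolding Gq n_def[symmetric] dq_def[symmetric] by (simp add: algebra_simps)
      thus ?thesis by (simp only: ar2)
    qed
    have "0 \<le> rho * dq" using rho dq by simp
    moreover have "x \<bullet> (B *v x) = x \<bullet> (A *v x) + dq" by (simp add: Bq dq_def)
    moreover have "a0 * n \<le> x \<bullet> (A *v x)" "x \<bullet> (A *v x) \<le> b0 * n" using Alo Aup by (simp_all add: n_def)
    ultimately show ?thesis unfolding e1 e2 by (simp add: algebra_simps)
  qed
  have Binvt: "invertible B"
  proof (rule pd_invertible)
    fix x :: "real^('w \<times> 'b)" assume "x \<noteq> 0"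
    hence "0 < a0 * (norm x)^2" using a0_pos by simp
    thus "0 < x \<bullet> (B *v x)" using aB[of x] by linarith
  qed
  define Binv where "Binv = matrix_inv B"
  have BB: "B ** Binv = mat 1" unfolding Binv_def by (rule invertible_inv(1)[OF Binvt])
  define T where "T = H ** B"
  have GT: "G ** T = B" unfolding T_def by (simp add: matrix_mul_assoc GH)
  have TB: "T *v (Binv *v v) = H *v v" for v
    unfolding T_def by (simp add: matrix_vector_mul_assoc matrix_mul_assoc[symmetric] BB)
  obtain h where qh: "q = 2 * h" using q_even by (rule evenE)
  have h1: "1 \<le> h" using q_pos qh by simp
  have bwA: "bw A h" unfolding bw_def
  proof (intro allI impI)
    fix p p' :: "'w \<times> 'b" assume "h < blk_dist (fst p) (fst p')"
    hence "blk A (fst p) (fst p') = 0" using A_band qh by simp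
    hence "blk A (fst p) (fst p') $ snd p $ snd p' = 0" by simp
    thus "A $ p $ p' = 0" by (simp add: blk_def)
  qed
  have bwD: "bw D h" unfolding bw_def
  proof (intro allI impI)
    fix p p' :: "'w \<times> 'b" assume "h < blk_dist (fst p) (fst p')"
    hence "fst p \<noteq> fst p'" by auto
    thus "D $ p $ p' = 0" by (rule Dblk)
  qed
  have bwB: "bw B h" unfolding B_def by (rule bw_add[OF bwA bwD])
  have bwT: "bw T h" unfolding T_def using bw_mult[OF bwH bwB] by simp
  define dset where "dset = {blk_dist i j | i j. i \<in> SR \<and> j \<in> SC}"
  define d where "d = Min dset"
  have fin_d: "finite dset"
    by (rule finite_subset[of _ "(\<lambda>(i, j). blk_dist i j) ` (UNIV \<times> UNIV)"]) (auto simp: dset_def)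
  have dle: "d \<le> blk_dist i j" if "i \<in> SR" "j \<in> SC" for i j
    unfolding d_def using fin_d that by (intro Min_le) (auto simp: dset_def)
  define k where "k = nat \<lceil>real d / real h\<rceil>"
  have dh0: "0 \<le> real d / real h" by simp
  have kge: "real d / real h \<le> real k" unfolding k_def using dh0 by linarith
  have klt: "real (k - 1) * real h < real d" if "1 \<le> k"
  proof -
    have "real k - 1 < real d / real h" unfolding k_def using dh0 ceiling_correct[of "real d / real h"] by linarith
    hence "real (k - 1) < real d / real h" using that by (simp add: of_nat_diff)
    thus ?thesis using h1 by (simp add: pos_less_divide_eq)
  qed
  define u where "u = (sqrt (b0 / a0) - 1) / (sqrt (b0 / a0) + 1)"
  define t where "t = cheb k (1 / rho)"
  have upos: "0 < u" and ult: "u < 1" using cheb_const[OF a0_pos a0_b0] by (simp_all add: u_def)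
  have tpos: "0 < t" using cheb_const(3)[OF a0_pos a0_b0] by (simp add: t_def irho)
  have tb: "1 / t \<le> 2 * u ^ k" using cheb_const(4)[OF a0_pos a0_b0] by (simp add: t_def irho u_def)
  define Zm where "Zm = qm rho T k ** H"
  have decomp: "Binv *v v = (1 / t) *\<^sub>R (chm rho T k *v (Binv *v v)) - (1 / t) *\<^sub>R (Zm *v v)" for v
  proof -
    have "chm rho T k *v (Binv *v v) = (t *\<^sub>R mat 1 + qm rho T k ** T) *v (Binv *v v)"
      by (simp only: chm_qm t_def)
    also have "\<dots> = t *\<^sub>R (Binv *v v) + qm rho T k *v (T *v (Binv *v v))"
      by (simp only: mv_add_r mv_scale_l matrix_vector_mul_lid matrix_vector_mul_assoc[symmetric])
    also have "\<dots> = t *\<^sub>R (Binv *v v) + Zm *v v" by (simp only: TB Zm_def matrix_vector_mul_assoc[symmetric])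
    finally have "chm rho T k *v (Binv *v v) = t *\<^sub>R (Binv *v v) + Zm *v v" .
    hence "(1 / t) *\<^sub>R (chm rho T k *v (Binv *v v)) = Binv *v v + (1 / t) *\<^sub>R (Zm *v v)"
      using tpos by (simp add: scaleR_add_right)
    thus ?thesis by (simp add: algebra_simps)
  qed
  have Zzero: "blk_proj SR (Zm *v blk_proj SC x) = 0" for x
  proof (cases "k = 0")
    case True thus ?thesis by (simp add: Zm_def blk_proj_zero)
  next
    case False
    have "bw Zm ((k - 1) * h + 0)" unfolding Zm_def by (rule bw_mult[OF bw_qm[OF bwT] bwH])
    moreover have "\<forall>i\<in>SR. \<forall>j\<in>SC. (k - 1) * h + 0 < blk_dist i j"
    proof (intro ballI)
      fix i j assume "i \<in> SR" "j \<in> SC"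
      have "real ((k - 1) * h) < real d" using klt False by simp
      hence "(k - 1) * h < d" by linarith
      thus "(k - 1) * h + 0 < blk_dist i j" using dle[OF \<open>i \<in> SR\<close> \<open>j \<in> SC\<close>] by simp
    qed
    ultimately show ?thesis by (rule band_zero)
  qed
  have mainb: "norm (blk_proj SR (Binv *v blk_proj SC x)) \<le> (2 * u ^ k / a0) * norm x" for x
  proof -
    define xc where "xc = blk_proj SC x"
    have "blk_proj SR (Binv *v xc) = blk_proj SR ((1 / t) *\<^sub>R (chm rho T k *v (Binv *v xc)) - (1 / t) *\<^sub>R (Zm *v xc))"
      by (rule arg_cong[where f = "blk_proj SR", OF decomp])
    also have "\<dots> = (1 / t) *\<^sub>R blk_proj SR (chm rho T k *v (Binv *v xc)) - (1 / t) *\<^sub>R blk_proj SR (Zm *v xc)"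
      by (simp only: blk_proj_diff blk_proj_scale)
    also have "\<dots> = (1 / t) *\<^sub>R blk_proj SR (chm rho T k *v (Binv *v xc))"
      using Zzero[of x] by (simp add: xc_def)
    finally have "blk_proj SR (Binv *v xc) = (1 / t) *\<^sub>R blk_proj SR (chm rho T k *v (Binv *v xc))" .
    hence "norm (blk_proj SR (Binv *v xc)) = (1 / t) * norm (blk_proj SR (chm rho T k *v (Binv *v xc)))"
      using tpos by simp
    also have "\<dots> \<le> (1 / t) * norm (chm rho T k *v (Binv *v xc))"
      using tpos proj_norm by (intro mult_left_mono) auto
    also have "\<dots> \<le> (1 / t) * (norm xc / a0)"
      using tpos err_bound[OF symG symB GT al pdG rho ray a0_pos aB ar BB] by (intro mult_left_mono) auto
    also have "\<dots> \<le> (1 / t) * (norm x / a0)"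
      using tpos a0_pos proj_norm[of SC x] unfolding xc_def
      by (intro mult_left_mono divide_right_mono) auto
    also have "\<dots> \<le> (2 * u ^ k) * (norm x / a0)"
      using tb a0_pos by (intro mult_right_mono) auto
    finally show ?thesis unfolding xc_def by simp
  qed
  have onb: "blk_sub_norm (matrix_inv (A + D)) SR SC \<le> 2 * u ^ k / a0"
    unfolding blk_sub_norm_def B_def[symmetric] Binv_def[symmetric]
    by (rule onorm_le) (rule mainb)
  have "u ^ k \<le> (u powr (2 / real q)) ^ d"
  proof -
    have "u ^ k = u powr real k" using upos by (simp add: powr_realpow)
    also have "\<dots> \<le> u powr (real d / real h)" using upos ult kge by (intro powr_mono') auto
    also have "\<dots> = u powr (2 / real q * real d)" using qh by simp
    also have "\<dots> = (u powr (2 / real q)) powr real d" by (simp add: powr_powr)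
    also have "\<dots> = (u powr (2 / real q)) ^ d" using upos by (simp add: powr_realpow)
    finally show ?thesis .
  qed
  hence "2 * u ^ k / a0 \<le> (2 / a0) * (u powr (2 / real q)) ^ d"
    using a0_pos by (simp add: divide_right_mono)
  thus ?thesis using onb unfolding d_def dset_def u_def by linarith
qed

end
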